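(* For every integer $n\ge 4$, \[ R_n(x)=\begin{cases} xR_{n-1}(x)+R_{n-2}(x), & \text{if } n \text{ is odd},\\ R_{n-1}(x)+x^2R_{n-2}(x), & \text{if } n \text{ is even}.\end{cases} \]
   Context: For $n\ge1$ let $\Xi_n$ (the $L$-fence) be the poset on $\{x_1,\dots,x_n\}$ whose cover relations are exactly: $x_2\prec x_1$, $x_3\prec x_2$, and for $3\le i\le n-1$, $x_i\prec x_{i+1}$ if $i$ is odd and $x_{i+1}\prec x_i$ if $i$ is even (so $x_1>x_2>x_3<x_4>x_5<\cdots$). A filter of a poset $P$ is a subset $F$ with $x\in F$, $x\le y\Rightarrow y\in F$. $\Omega_n$ is the lattice of filters of $\Xi_n$ ordered by reverse inclusion; $\Omega_0$ is the one-element lattice. The rank generating function of $\Omega_n$ is $R_n(x)=\sum_{F\in\Omega_n}x^{\,n-|F|}$, with $R_0(x)=1$. *)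

theory Defs
  imports "HOL-Computational_Algebra.Polynomial"
begin

text \<open>The L-fence on {x_1,...,x_n}, element x_i represented by the natural number i.
  fence_cover n a b means x_a is covered by x_b (x_a \<prec> x_b).\<close>
definition fence_cover :: "nat \<Rightarrow> nat \<Rightarrow> nat \<Rightarrow> bool" where
  "fence_cover n a b \<longleftrightarrow> a \<in> {1..n} \<and> b \<in> {1..n} \<and>
     ((a = 2 \<and> b = 1) \<or> (a = 3 \<and> b = 2) \<or>
      (\<exists>i. 3 \<le> i \<and> i \<le> n - 1 \<and>
          ((odd i \<and> a = i \<and> b = i + 1) \<or> (even i \<and> a = i + 1 \<and> b = i))))"

definition fence_le :: "nat \<Rightarrow> nat \<Rightarrow> nat \<Rightarrow> bool" where
  "fence_le n = (fence_cover n)\<^sup>*\<^sup>*"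

definition fence_filters :: "nat \<Rightarrow> nat set set" where
  "fence_filters n = {F. F \<subseteq> {1..n} \<and>
     (\<forall>x y. x \<in> F \<longrightarrow> y \<in> {1..n} \<longrightarrow> fence_le n x y \<longrightarrow> y \<in> F)}"

definition rank_gen :: "nat \<Rightarrow> int poly" where
  "rank_gen n = (\<Sum>F\<in>fence_filters n. monom 1 (n - card F))"

end

theory Submission
  imports Defs
begin

definition cov :: "nat \<Rightarrow> nat \<Rightarrow> bool" where
  "cov a b \<longleftrightarrow> (a = 2 \<and> b = 1) \<or> (a = 3 \<and> b = 2) \<or> (a \<ge> 3 \<and> odd a \<and> b = a + 1)
     \<or> (b \<ge> 3 \<and> even b \<and> a = b + 1)"

lemma fence_cover_cov: "fence_cover n a b \<longleftrightarrow> a \<in> {1..n} \<and> b \<in> {1..n} \<and> cov a b"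
  unfolding fence_cover_def cov_def
  apply (rule iffI)
   apply (elim conjE disjE exE; auto)
  apply (elim conjE disjE; auto)
  done

lemma ff_char: "fence_filters n = {F. F \<subseteq> {1..n} \<and> (\<forall>a\<in>F. \<forall>b\<in>{1..n}. cov a b \<longrightarrow> b \<in> F)}"
proof (intro set_eqI iffI)
  fix F assume "F \<in> fence_filters n"
  then show "F \<in> {F. F \<subseteq> {1..n} \<and> (\<forall>a\<in>F. \<forall>b\<in>{1..n}. cov a b \<longrightarrow> b \<in> F)}"
    unfolding fence_filters_def fence_le_def
  proof (intro CollectI conjI ballI impI)
    show "F \<subseteq> {1..n}" using \<open>F \<in> fence_filters n\<close> by (simp add: fence_filters_def)
  next
    fix a b assume "a \<in> F" "b \<in> {1..n}" "cov a b"
    moreover have "a \<in> {1..n}" using \<open>F \<in> fence_filters n\<close> \<open>a \<in> F\<close> by (auto simp: fence_filters_def)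
    ultimately have "fence_le n a b" unfolding fence_le_def by (simp add: fence_cover_cov r_into_rtranclp)
    then show "b \<in> F" using \<open>F \<in> fence_filters n\<close> \<open>a \<in> F\<close> \<open>b \<in> {1..n}\<close> by (auto simp: fence_filters_def)
  qed
next
  fix F assume A: "F \<in> {F. F \<subseteq> {1..n} \<and> (\<forall>a\<in>F. \<forall>b\<in>{1..n}. cov a b \<longrightarrow> b \<in> F)}"
  have "(fence_cover n)\<^sup>*\<^sup>* x y \<Longrightarrow> x \<in> F \<Longrightarrow> y \<in> F" for x y
    by (induction rule: rtranclp_induct) (use A in \<open>auto simp: fence_cover_cov\<close>)
  with A show "F \<in> fence_filters n" unfolding fence_filters_def fence_le_def by auto
qed

lemma ff_sub: "F \<in> fence_filters n \<Longrightarrow> x \<in> F \<Longrightarrow> 1 \<le> x \<and> x \<le> n"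
  by (auto simp: ff_char)

lemma fin_ff: "finite (fence_filters n)"
  by (rule finite_subset[of _ "Pow {1..n}"]) (auto simp: ff_char)

lemma card_le: "F \<in> fence_filters n \<Longrightarrow> card F \<le> n"
  using card_mono[of "{1..n}" F] by (auto simp: ff_char)

lemma monom_shift: "k \<le> m \<Longrightarrow> monom (1::int) (m + j - k) = [:0,1:]^j * monom 1 (m - k)"
  by (simp add: monom_altdef power_add[symmetric] add.commute)

lemma odd_case:
  assumes "odd n" "n \<ge> 5"
  shows "rank_gen n = [:0, 1:] * rank_gen (n - 1) + rank_gen (n - 2)"
proof -
  let ?A = "fence_filters (n-1)"
  let ?f = "\<lambda>G. G \<union> {n-1, n}"
  let ?B = "?f ` fence_filters (n-2)"
  have covn: "\<not> cov a n" for a using assms unfolding cov_def by presburger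
  have covn1: "\<not> cov (n-1) b" for b using assms unfolding cov_def by presburger
  have covnb: "cov n (n-1)" using assms unfolding cov_def by presburger
  have covnb2: "cov n b \<Longrightarrow> b \<le> n \<Longrightarrow> b = n - 1" for b using assms unfolding cov_def by presburger
  have split: "fence_filters n = ?A \<union> ?B"
  proof (intro set_eqI iffI)
    fix F assume F: "F \<in> fence_filters n"
    show "F \<in> ?A \<union> ?B"
    proof (cases "n \<in> F")
      case False
      have sub: "F \<subseteq> {1..n-1}"
      proof
        fix x assume "x \<in> F"
        then have "x \<in> {1..n}" "x \<noteq> n" using F False by (auto simp: ff_char)
        then show "x \<in> {1..n-1}" by auto
      qed
      have "F \<in> ?A" using F sub unfolding ff_char by auto
      then show ?thesis by blast
    next
      case True
      with F covnb assms have n1: "n-1 \<in> F" by (auto simp: ff_char)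
      let ?G = "F - {n-1, n}"
      have "?G \<in> fence_filters (n-2)" using F unfolding ff_char by auto
      moreover have "F = ?f ?G" using True n1 by auto
      ultimately show ?thesis by blast
    qed
  next
    fix F assume "F \<in> ?A \<union> ?B"
    then show "F \<in> fence_filters n"
    proof
      assume FA: "F \<in> ?A"
      show ?thesis unfolding ff_char
      proof (intro CollectI conjI ballI impI)
        have "F \<subseteq> {1..n-1}" using FA by (simp add: ff_char)
        then show "F \<subseteq> {1..n}" by (rule subset_trans) auto
      next
        fix a b assume a: "a \<in> F" and b: "b \<in> {1..n}" and c: "cov a b"
        then have "b \<noteq> n" using covn by auto
        then have "b \<in> {1..n-1}" using b by auto
        then show "b \<in> F" using FA a c by (auto simp: ff_char)
      qed
    next
      assume "F \<in> ?B"
      then obtain G where G: "G \<in> fence_filters (n-2)" and FG: "F = ?f G" by blast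
      show ?thesis unfolding FG ff_char
      proof (intro CollectI conjI ballI impI)
        show "?f G \<subseteq> {1..n}"
        proof
          fix x assume "x \<in> ?f G"
          then show "x \<in> {1..n}" using ff_sub[OF G, of x] assms by auto
        qed
      next
        fix a b assume a: "a \<in> ?f G" and b: "b \<in> {1..n}" and c: "cov a b"
        show "b \<in> ?f G"
        proof (cases "b \<ge> n - 1")
          case True then show ?thesis using b by auto
        next
          case False
          then have "a \<noteq> n" "a \<noteq> n-1" using c covn1 covnb2 b by auto
          then have "a \<in> G" using a by auto
          then show ?thesis using G b False c unfolding ff_char by auto
        qed
      qed
    qed
  qed
  have disj: "?A \<inter> ?B = {}" using assms by (auto simp: ff_char)
  have rem: "?f G - {n-1,n} = G" if G: "G \<in> fence_filters (n-2)" for G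
  proof -
    have "\<forall>x\<in>G. x \<le> n-2" using G by (auto simp: ff_char)
    then have "n-1 \<notin> G" "n \<notin> G" using assms by auto
    then show ?thesis by auto
  qed
  have inj: "inj_on ?f (fence_filters (n-2))"
  proof (rule inj_onI)
    fix G H assume "G \<in> fence_filters (n-2)" "H \<in> fence_filters (n-2)" "?f G = ?f H"
    then have "G = ?f G - {n-1,n}" "H = ?f H - {n-1,n}" using rem by auto
    with \<open>?f G = ?f H\<close> show "G = H" by simp
  qed
  have s1: "(\<Sum>F\<in>?A. monom (1::int) (n - card F)) = [:0,1:] * rank_gen (n-1)"
    unfolding rank_gen_def sum_distrib_left
  proof (rule sum.cong[OF refl])
    fix F assume "F \<in> ?A"
    then have "card F \<le> n - 1" by (rule card_le)
    then show "monom (1::int) (n - card F) = [:0,1:] * monom 1 (n - 1 - card F)"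
    proof -
      have e: "n - card F = Suc (n - 1 - card F)" using \<open>card F \<le> n - 1\<close> assms by simp
      show ?thesis by (simp only: e monom_Suc) simp
    qed
  qed
  have s2: "(\<Sum>F\<in>?B. monom (1::int) (n - card F)) = rank_gen (n-2)"
    unfolding rank_gen_def sum.reindex[OF inj] o_def
  proof (rule sum.cong[OF refl])
    fix G assume G: "G \<in> fence_filters (n-2)"
    have "finite G" using G by (auto simp: ff_char intro: finite_subset)
    moreover have "n-1 \<notin> G" using ff_sub[OF G, of "n-1"] assms by auto
    moreover have "n \<notin> G" using ff_sub[OF G, of "n"] assms by auto
    ultimately have "card (?f G) = card G + 2" using assms by simp
    then show "monom (1::int) (n - card (?f G)) = monom 1 (n - 2 - card G)" by simp
  qed
  show ?thesis unfolding rank_gen_def split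
    by (subst sum.union_disjoint) (use fin_ff disj s1 s2 in \<open>auto simp: rank_gen_def\<close>)
qed


lemma even_case:
  assumes "even n" "n \<ge> 4"
  shows "rank_gen n = rank_gen (n - 1) + [:0, 1:] ^ 2 * rank_gen (n - 2)"
proof -
  let ?B = "fence_filters (n-2)"
  let ?A = "insert n ` fence_filters (n-1)"
  have covn: "\<not> cov n b" for b using assms unfolding cov_def by presburger
  have covn1: "\<not> cov a (n-1)" for a using assms unfolding cov_def by presburger
  have covan: "cov (n-1) n" using assms unfolding cov_def by presburger
  have covan2: "cov a n \<Longrightarrow> a \<le> n \<Longrightarrow> a = n - 1" for a using assms unfolding cov_def by presburger
  have split: "fence_filters n = ?A \<union> ?B"
  proof (intro set_eqI iffI)
    fix F assume F: "F \<in> fence_filters n"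
    show "F \<in> ?A \<union> ?B"
    proof (cases "n \<in> F")
      case False
      have n1: "n-1 \<notin> F"
      proof
        assume "n-1 \<in> F"
        then have "n \<in> F" using F covan assms by (auto simp: ff_char)
        with False show False by simp
      qed
      have sub: "F \<subseteq> {1..n-2}"
      proof
        fix x assume "x \<in> F"
        then have "1 \<le> x" "x \<le> n" "x \<noteq> n" "x \<noteq> n-1" using ff_sub[OF F, of x] False n1 by auto
        then show "x \<in> {1..n-2}" by auto
      qed
      have "F \<in> ?B" unfolding ff_char
      proof (intro CollectI conjI ballI impI)
        show "F \<subseteq> {1..n-2}" by (rule sub)
      next
        fix a b assume "a \<in> F" "b \<in> {1..n-2}" "cov a b"
        then show "b \<in> F" using F by (auto simp: ff_char)
      qed
      then show ?thesis by blast
    next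
      case True
      let ?G = "F - {n}"
      have sub: "?G \<subseteq> {1..n-1}"
      proof
        fix x assume "x \<in> ?G"
        then have "1 \<le> x" "x \<le> n" "x \<noteq> n" using ff_sub[OF F, of x] by auto
        then show "x \<in> {1..n-1}" by auto
      qed
      have "?G \<in> fence_filters (n-1)" unfolding ff_char
      proof (intro CollectI conjI ballI impI)
        show "?G \<subseteq> {1..n-1}" by (rule sub)
      next
        fix a b assume "a \<in> ?G" "b \<in> {1..n-1}" "cov a b"
        then show "b \<in> ?G" using F assms by (auto simp: ff_char)
      qed
      moreover have "F = insert n ?G" using True by auto
      ultimately show ?thesis by blast
    qed
  next
    fix F assume "F \<in> ?A \<union> ?B"
    then show "F \<in> fence_filters n"
    proof
      assume FB: "F \<in> ?B"
      show ?thesis unfolding ff_char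
      proof (intro CollectI conjI ballI impI)
        show "F \<subseteq> {1..n}"
        proof
          fix x assume "x \<in> F"
          then show "x \<in> {1..n}" using ff_sub[OF FB, of x] by auto
        qed
      next
        fix a b assume a: "a \<in> F" and b: "b \<in> {1..n}" and c: "cov a b"
        have "a \<le> n - 2" using ff_sub[OF FB a] by auto
        have "b \<noteq> n"
        proof
          assume "b = n"
          then have "a = n - 1" using covan2[of a] c \<open>a \<le> n - 2\<close> by auto
          then show False using \<open>a \<le> n - 2\<close> assms by auto
        qed
        moreover have "b \<noteq> n - 1" using covn1 c by auto
        ultimately have "b \<in> {1..n-2}" using b by auto
        then show "b \<in> F" using FB a c by (auto simp: ff_char)
      qed
    next
      assume "F \<in> ?A"
      then obtain G where G: "G \<in> fence_filters (n-1)" and FG: "F = insert n G" by blast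
      show ?thesis unfolding FG ff_char
      proof (intro CollectI conjI ballI impI)
        show "insert n G \<subseteq> {1..n}"
        proof
          fix x assume "x \<in> insert n G"
          then show "x \<in> {1..n}" using ff_sub[OF G, of x] assms by auto
        qed
      next
        fix a b assume a: "a \<in> insert n G" and b: "b \<in> {1..n}" and c: "cov a b"
        show "b \<in> insert n G"
        proof (cases "b = n")
          case True then show ?thesis by auto
        next
          case False
          then have "b \<in> {1..n-1}" using b by auto
          moreover have "a \<in> G" using a c covn by auto
          ultimately show ?thesis using G c unfolding ff_char by auto
        qed
      qed
    qed
  qed
  have nG: "n \<notin> G" if "G \<in> fence_filters (n-1)" for G
    using ff_sub[OF that, of n] assms by auto
  have disj: "?A \<inter> ?B = {}"
  proof -
    have "n \<notin> F" if "F \<in> ?B" for F using ff_sub[OF that, of n] assms by auto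
    then show ?thesis by auto
  qed
  have inj: "inj_on (insert n) (fence_filters (n-1))"
  proof (rule inj_onI)
    fix G H assume G: "G \<in> fence_filters (n-1)" and H: "H \<in> fence_filters (n-1)" and "insert n G = insert n H"
    have "G = insert n G - {n}" using nG[OF G] by auto
    moreover have "H = insert n H - {n}" using nG[OF H] by auto
    ultimately show "G = H" using \<open>insert n G = insert n H\<close> by simp
  qed
  have s2: "(\<Sum>F\<in>?B. monom (1::int) (n - card F)) = [:0,1:]^2 * rank_gen (n-2)"
    unfolding rank_gen_def sum_distrib_left
  proof (rule sum.cong[OF refl])
    fix F assume "F \<in> ?B"
    then have "card F \<le> n - 2" by (rule card_le)
    then show "monom (1::int) (n - card F) = [:0,1:]^2 * monom 1 (n - 2 - card F)"
    proof -
      have "n - 2 + 2 - card F = n - card F" using assms by simp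
      then show ?thesis using monom_shift[of "card F" "n-2" 2] \<open>card F \<le> n - 2\<close> by simp
    qed
  qed
  have s1: "(\<Sum>F\<in>?A. monom (1::int) (n - card F)) = rank_gen (n-1)"
    unfolding rank_gen_def sum.reindex[OF inj] o_def
  proof (rule sum.cong[OF refl])
    fix G assume G: "G \<in> fence_filters (n-1)"
    have "finite G" using G by (auto simp: ff_char intro: finite_subset)
    then have "card (insert n G) = card G + 1" using nG[OF G] by simp
    then show "monom (1::int) (n - card (insert n G)) = monom 1 (n - 1 - card G)" by simp
  qed
  show ?thesis unfolding rank_gen_def split
    by (subst sum.union_disjoint) (use fin_ff disj s1 s2 in \<open>auto simp: rank_gen_def\<close>)
qed

theorem mainTheorem2:
  fixes n :: nat
  assumes "n \<ge> 4"
  shows "rank_gen n =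
    (if odd n then [:0, 1:] * rank_gen (n - 1) + rank_gen (n - 2)
     else rank_gen (n - 1) + [:0, 1:] ^ 2 * rank_gen (n - 2))"
proof (cases "odd n")
  case True
  then have "n \<ge> 5" using assms by presburger
  with True show ?thesis using odd_case by simp
next
  case False
  then show ?thesis using even_case assms by simp
qed

end
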